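(* For every integer $n \geq 1$, let $r(n)$ be the number of three-candidate ballot sequences of length $n$ whose numbers $m_A, m_B, m_C$ of $A$'s, $B$'s and $C$'s satisfy $m_A \equiv m_B \equiv m_C \pmod 2$, and let $M(n)$ be the total number of three-candidate ballot sequences of length $n$. Then $M(n) = r(n) + r(n+1)$.
   Context: A three-candidate ballot sequence of length $n$ is a word $b_1\cdots b_n$ with $b_i\in\{A,B,C\}$ such that in every prefix $b_1\cdots b_k$ ($1\le k\le n$) the number of $A$'s is at least the number of $B$'s, which is at least the number of $C$'s. *)

theory Defs
  imports Main
begin

datatype cand = CA | CB | CC

definition cnt :: "cand \<Rightarrow> cand list \<Rightarrow> nat" where
  "cnt c w = length (filter (\<lambda>x. x = c) w)"

definition ballot_seq :: "cand list \<Rightarrow> bool" where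
  "ballot_seq w \<longleftrightarrow> (\<forall>k. 1 \<le> k \<and> k \<le> length w \<longrightarrow>
      cnt CA (take k w) \<ge> cnt CB (take k w) \<and> cnt CB (take k w) \<ge> cnt CC (take k w))"

definition ballots :: "nat \<Rightarrow> cand list set" where
  "ballots n = {w. length w = n \<and> ballot_seq w}"

definition M :: "nat \<Rightarrow> nat" where
  "M n = card (ballots n)"

definition r :: "nat \<Rightarrow> nat" where
  "r n = card {w \<in> ballots n. even (cnt CA w + cnt CB w) \<and> even (cnt CB w + cnt CC w)}"

end

theory Submission
  imports Defs
begin

lemma cnt_snoc[simp]: "cnt c (w @ [d]) = cnt c w + (if d = c then 1 else 0)"
  by (simp add: cnt_def)

lemma cnt_Nil[simp]: "cnt c [] = 0"
  by (simp add: cnt_def)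

lemma ballot_snoc:
  "ballot_seq (w @ [c]) \<longleftrightarrow> ballot_seq w \<and>
     cnt CA (w@[c]) \<ge> cnt CB (w@[c]) \<and> cnt CB (w@[c]) \<ge> cnt CC (w@[c])"
  (is "?l \<longleftrightarrow> ?r")
proof
  assume l: ?l
  have "ballot_seq w" unfolding ballot_seq_def
  proof (intro allI impI)
    fix k assume k: "1 \<le> k \<and> k \<le> length w"
    then have "take k (w@[c]) = take k w" by simp
    moreover have "1 \<le> k \<and> k \<le> length (w@[c])" using k by simp
    ultimately show "cnt CA (take k w) \<ge> cnt CB (take k w) \<and> cnt CB (take k w) \<ge> cnt CC (take k w)"
      using l unfolding ballot_seq_def by (metis (no_types))
  qed
  moreover have "cnt CA (w@[c]) \<ge> cnt CB (w@[c]) \<and> cnt CB (w@[c]) \<ge> cnt CC (w@[c])"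
  proof -
    have "1 \<le> length (w@[c]) \<and> length (w@[c]) \<le> length (w@[c])" by simp
    with l have "cnt CA (take (length (w@[c])) (w@[c])) \<ge> cnt CB (take (length (w@[c])) (w@[c])) \<and> cnt CB (take (length (w@[c])) (w@[c])) \<ge> cnt CC (take (length (w@[c])) (w@[c]))"
      unfolding ballot_seq_def by blast
    then show ?thesis using take_all[OF order_refl, of "w@[c]"] by (simp only:)
  qed
  ultimately show ?r by blast
next
  assume r: ?r
  show ?l unfolding ballot_seq_def
  proof (intro allI impI)
    fix k assume k: "1 \<le> k \<and> k \<le> length (w@[c])"
    show "cnt CA (take k (w@[c])) \<ge> cnt CB (take k (w@[c])) \<and> cnt CB (take k (w@[c])) \<ge> cnt CC (take k (w@[c]))"
    proof (cases "k \<le> length w")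
      case True
      then have "take k (w@[c]) = take k w" by simp
      with r k True show ?thesis unfolding ballot_seq_def by simp
    next
      case False
      with k have "take k (w@[c]) = w@[c]" by simp
      with r show ?thesis by simp
    qed
  qed
qed

lemma ballot_full: assumes "ballot_seq w" shows "cnt CA w \<ge> cnt CB w \<and> cnt CB w \<ge> cnt CC w"
proof (cases "w = []")
  case False
  then have "1 \<le> length w \<and> length w \<le> length w" by (cases w) auto
  with assms have "cnt CA (take (length w) w) \<ge> cnt CB (take (length w) w) \<and> cnt CB (take (length w) w) \<ge> cnt CC (take (length w) w)"
    unfolding ballot_seq_def by blast
  then show ?thesis by simp
qed simp

definition P :: "cand list \<Rightarrow> bool" where
  "P w \<longleftrightarrow> even (cnt CA w + cnt CB w) \<and> even (cnt CB w + cnt CC w)"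

definition nxt :: "cand list \<Rightarrow> cand" where
  "nxt w = (if even (cnt CB w + cnt CC w) then CA
            else if odd (cnt CA w + cnt CB w) then CB else CC)"

lemma UNIV_cand: "(UNIV :: cand set) = {CA, CB, CC}"
  using cand.exhaust by auto

lemma fin_ballots: "finite (ballots n)"
proof -
  have "ballots n \<subseteq> {xs. set xs \<subseteq> UNIV \<and> length xs = n}" by (auto simp: ballots_def)
  moreover have "finite {xs. set xs \<subseteq> (UNIV::cand set) \<and> length xs = n}"
    by (rule finite_lists_length_eq) (simp add: UNIV_cand)
  ultimately show ?thesis by (rule finite_subset)
qed

lemma bij: "bij_betw butlast {w \<in> ballots (n+1). P w} {w \<in> ballots n. \<not> P w}"
proof (rule bij_betw_byWitness[where f' = "\<lambda>w. w @ [nxt w]"])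
  show "butlast ` {w \<in> ballots (n+1). P w} \<subseteq> {w \<in> ballots n. \<not> P w}"
  proof (rule image_subsetI)
    fix x assume x: "x \<in> {w \<in> ballots (n+1). P w}"
    then have "x \<noteq> []" by (auto simp: ballots_def)
    then obtain u c where xu: "x = u @ [c]" by (metis append_butlast_last_id)
    with x show "butlast x \<in> {w \<in> ballots n. \<not> P w}"
      by (cases c) (auto simp: ballots_def ballot_snoc P_def)
  qed
  show "(\<lambda>w. w @ [nxt w]) ` {w \<in> ballots n. \<not> P w} \<subseteq> {w \<in> ballots (n+1). P w}"
  proof (rule image_subsetI)
    fix y assume y: "y \<in> {w \<in> ballots n. \<not> P w}"
    then have b: "ballot_seq y" and np: "\<not> P y" and ly: "length y = n" by (auto simp: ballots_def)
    from ballot_full[OF b] have i: "cnt CA y \<ge> cnt CB y" "cnt CB y \<ge> cnt CC y" by auto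
    have "ballot_seq (y @ [nxt y]) \<and> P (y @ [nxt y])"
    proof (cases "even (cnt CB y + cnt CC y)")
      case True
      with b np i show ?thesis unfolding ballot_snoc nxt_def P_def by simp
    next
      case F: False
      show ?thesis
      proof (cases "odd (cnt CA y + cnt CB y)")
        case True
        then have "cnt CA y \<noteq> cnt CB y" by auto
        with F True b i show ?thesis unfolding ballot_snoc nxt_def P_def by simp
      next
        case False
        with F have "cnt CB y \<noteq> cnt CC y" by auto
        with F False b i show ?thesis unfolding ballot_snoc nxt_def P_def by simp
      qed
    qed
    with ly show "y @ [nxt y] \<in> {w \<in> ballots (n+1). P w}" by (auto simp: ballots_def)
  qed
  show "\<forall>x \<in> {w \<in> ballots (n+1). P w}. butlast x @ [nxt (butlast x)] = x"
  proof
    fix x assume x: "x \<in> {w \<in> ballots (n+1). P w}"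
    from x have "x \<noteq> []" by (auto simp: ballots_def)
    then obtain u c where xu: "x = u @ [c]" by (metis append_butlast_last_id)
    with x have "nxt u = c"
      by (cases c) (auto simp: P_def nxt_def)
    with xu show "butlast x @ [nxt (butlast x)] = x" by simp
  qed
  show "\<forall>y \<in> {w \<in> ballots n. \<not> P w}. butlast (y @ [nxt y]) = y" by simp
qed

theorem mainTheorem5:
  fixes n :: nat
  assumes "n \<ge> 1"
  shows "M n = r n + r (n + 1)"
proof -
  have "r (n+1) = card {w \<in> ballots (n+1). P w}" by (simp add: r_def P_def)
  also have "\<dots> = card {w \<in> ballots n. \<not> P w}" using bij by (rule bij_betw_same_card)
  finally have 1: "r (n+1) = card {w \<in> ballots n. \<not> P w}" .
  have 2: "r n = card {w \<in> ballots n. P w}" by (simp add: r_def P_def)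
  have "ballots n = {w \<in> ballots n. P w} \<union> {w \<in> ballots n. \<not> P w}" by auto
  then have "M n = card {w \<in> ballots n. P w} + card {w \<in> ballots n. \<not> P w}"
    unfolding M_def using fin_ballots[of n]
    by (metis (no_types, lifting) card_Un_disjoint disjoint_iff finite_Un mem_Collect_eq)
  with 1 2 show ?thesis by simp
qed

end
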